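(* Let $G=(N,A)$ be a compressed $s$-$t$ DAG and let $u,v\in N$ be distinct nodes. If $u$ is the immediate $s$-dominator of $v$ and $v$ is the immediate $t$-dominator of $u$, then $u$ is the immediate $s$-dominator of some node different from $v$, and $v$ is the immediate $t$-dominator of some node different from $u$.
   Context: An $s$-$t$ DAG is a directed acyclic graph with a unique source $s$ and a unique sink $t$ such that every node is reachable from $s$ and every node reaches $t$. A unitary path is a path in which every node other than the first has indegree exactly one and every node other than the last has outdegree exactly one. The DAG is compressed if it has no unitary path with two or more nodes (equivalently, no arc $xy$ such that $y$ is the only out-neighbour of $x$ and $x$ is the only in-neighbour of $y$). A node $a$ $s$-dominates $b$ if every $s$-$b$ path contains $a$ (strictly if $a\neq b$); $a$ $t$-dominates $b$ if every $b$-$t$ path contains $a$. For $b\neq s$, the immediate $s$-dominator of $b$ is the strict $s$-dominator of $b$ that is $s$-dominated by all strict $s$-dominators of $b$; immediate $t$-dominators are defined symmetrically. *)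

theory Defs
  imports Main
begin

definition is_path :: "('a \<times> 'a) set \<Rightarrow> 'a list \<Rightarrow> bool" where
  "is_path A p \<longleftrightarrow> p \<noteq> [] \<and> (\<forall>i. Suc i < length p \<longrightarrow> (p ! i, p ! Suc i) \<in> A)"

definition in_nbrs :: "('a \<times> 'a) set \<Rightarrow> 'a \<Rightarrow> 'a set" where
  "in_nbrs A y = {x. (x, y) \<in> A}"

definition out_nbrs :: "('a \<times> 'a) set \<Rightarrow> 'a \<Rightarrow> 'a set" where
  "out_nbrs A x = {y. (x, y) \<in> A}"

definition st_dag :: "'a set \<Rightarrow> ('a \<times> 'a) set \<Rightarrow> 'a \<Rightarrow> 'a \<Rightarrow> bool" where
  "st_dag N A s t \<longleftrightarrow>
     finite N \<and> A \<subseteq> N \<times> N \<and> acyclic A \<and> s \<in> N \<and> t \<in> N \<and>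
     {x \<in> N. in_nbrs A x = {}} = {s} \<and>
     {x \<in> N. out_nbrs A x = {}} = {t} \<and>
     (\<forall>x \<in> N. (s, x) \<in> A\<^sup>* \<and> (x, t) \<in> A\<^sup>*)"

definition compressed :: "('a \<times> 'a) set \<Rightarrow> bool" where
  "compressed A \<longleftrightarrow>
     \<not> (\<exists>x y. (x, y) \<in> A \<and> out_nbrs A x = {y} \<and> in_nbrs A y = {x})"

definition s_dom :: "('a \<times> 'a) set \<Rightarrow> 'a \<Rightarrow> 'a \<Rightarrow> 'a \<Rightarrow> bool" where
  "s_dom A s a b \<longleftrightarrow> (\<forall>p. is_path A p \<and> hd p = s \<and> last p = b \<longrightarrow> a \<in> set p)"

definition t_dom :: "('a \<times> 'a) set \<Rightarrow> 'a \<Rightarrow> 'a \<Rightarrow> 'a \<Rightarrow> bool" where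
  "t_dom A t a b \<longleftrightarrow> (\<forall>p. is_path A p \<and> hd p = b \<and> last p = t \<longrightarrow> a \<in> set p)"

definition imm_s_dom :: "'a set \<Rightarrow> ('a \<times> 'a) set \<Rightarrow> 'a \<Rightarrow> 'a \<Rightarrow> 'a \<Rightarrow> bool" where
  "imm_s_dom N A s u v \<longleftrightarrow>
     u \<in> N \<and> v \<in> N \<and> v \<noteq> s \<and> u \<noteq> v \<and> s_dom A s u v \<and>
     (\<forall>w \<in> N. w \<noteq> v \<and> s_dom A s w v \<longrightarrow> s_dom A s w u)"

definition imm_t_dom :: "'a set \<Rightarrow> ('a \<times> 'a) set \<Rightarrow> 'a \<Rightarrow> 'a \<Rightarrow> 'a \<Rightarrow> bool" where
  "imm_t_dom N A t u v \<longleftrightarrow>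
     u \<in> N \<and> v \<in> N \<and> v \<noteq> t \<and> u \<noteq> v \<and> t_dom A t u v \<and>
     (\<forall>w \<in> N. w \<noteq> v \<and> t_dom A t w v \<longrightarrow> t_dom A t w u)"

end

theory Submission
  imports Defs
begin

lemma is_path_Cons: "is_path A (x # p) \<longleftrightarrow> p = [] \<or> ((x, hd p) \<in> A \<and> is_path A p)"
proof (cases p)
  case Nil then show ?thesis by (simp add: is_path_def)
next
  case (Cons y q)
  have "(\<forall>i. Suc i < length (x # y # q) \<longrightarrow> ((x # y # q) ! i, (x # y # q) ! Suc i) \<in> A)
     \<longleftrightarrow> (x, y) \<in> A \<and> (\<forall>i. Suc i < length (y # q) \<longrightarrow> ((y # q) ! i, (y # q) ! Suc i) \<in> A)"
    (is "?L \<longleftrightarrow> ?R")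
  proof
    assume ?L then show ?R by (metis Suc_less_eq length_Cons nth_Cons_0 nth_Cons_Suc zero_less_Suc)
  next
    assume R: ?R show ?L
    proof (intro allI impI)
      fix i assume "Suc i < length (x # y # q)"
      then show "((x # y # q) ! i, (x # y # q) ! Suc i) \<in> A"
        using R by (cases i) auto
    qed
  qed
  then show ?thesis using Cons by (simp add: is_path_def)
qed

lemma path_glue: "is_path A p \<Longrightarrow> is_path A q \<Longrightarrow> last p = hd q \<Longrightarrow> is_path A (p @ tl q)"
proof (induction p)
  case Nil then show ?case by (simp add: is_path_def)
next
  case (Cons x p)
  show ?case
  proof (cases "p = []")
    case True
    then show ?thesis using Cons.prems
      by (cases q) (auto simp: is_path_Cons)
  next
    case False
    then show ?thesis using Cons by (auto simp: is_path_Cons)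
  qed
qed

lemma path_last_reach: "is_path A p \<Longrightarrow> z \<in> set p \<Longrightarrow> (z, last p) \<in> A\<^sup>*"
proof (induction p arbitrary: z)
  case Nil then show ?case by simp
next
  case (Cons x p)
  show ?case
  proof (cases "p = []")
    case True then show ?thesis using Cons by simp
  next
    case False
    then have "(x, hd p) \<in> A" "is_path A p" using Cons.prems by (auto simp: is_path_Cons)
    moreover have "(hd p, last p) \<in> A\<^sup>*" using Cons.IH calculation hd_in_set[OF False] by simp
    moreover have "z = x \<or> z \<in> set p" using Cons.prems by simp
    ultimately show ?thesis using Cons.IH False
      by (metis converse_rtrancl_into_rtrancl last_ConsR)
  qed
qed

lemma path_hd_reach: "is_path A p \<Longrightarrow> z \<in> set p \<Longrightarrow> (hd p, z) \<in> A\<^sup>*"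
proof (induction p)
  case Nil then show ?case by simp
next
  case (Cons x p)
  show ?case
  proof (cases "z = x")
    case True then show ?thesis by simp
  next
    case False
    then have "p \<noteq> []" "(x, hd p) \<in> A" "is_path A p" "z \<in> set p" using Cons.prems by (auto simp: is_path_Cons)
    then show ?thesis using Cons.IH by (simp add: converse_rtrancl_into_rtrancl)
  qed
qed

lemma reach_path: "(x, y) \<in> A\<^sup>* \<Longrightarrow> \<exists>p. is_path A p \<and> hd p = x \<and> last p = y"
proof (induction rule: converse_rtrancl_induct)
  case base then show ?case by (intro exI[of _ "[y]"]) (simp add: is_path_def)
next
  case (step a b)
  then obtain p where "is_path A p" "hd p = b" "last p = y" by blast
  moreover have "p \<noteq> []" using calculation by (simp add: is_path_def)
  ultimately show ?case using step by (intro exI[of _ "a # p"]) (simp add: is_path_Cons)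
qed

lemma path_prefix: "is_path A p \<Longrightarrow> z \<in> set p \<Longrightarrow>
   \<exists>q. is_path A q \<and> hd q = hd p \<and> last q = z \<and> set q \<subseteq> set p"
proof (induction p)
  case Nil then show ?case by simp
next
  case (Cons x p)
  show ?case
  proof (cases "z = x")
    case True then show ?thesis by (intro exI[of _ "[x]"]) (simp add: is_path_def)
  next
    case False
    then have "p \<noteq> []" "(x, hd p) \<in> A" "is_path A p" "z \<in> set p" using Cons.prems by (auto simp: is_path_Cons)
    then obtain q where q: "is_path A q" "hd q = hd p" "last q = z" "set q \<subseteq> set p" using Cons.IH by blast
    then have "q \<noteq> []" by (simp add: is_path_def)
    then show ?thesis using q \<open>(x, hd p) \<in> A\<close> by (intro exI[of _ "x # q"]) (auto simp: is_path_Cons)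
  qed
qed

lemma path_rev: "is_path A p \<Longrightarrow> is_path (A\<inverse>) (rev p)"
  unfolding is_path_def
proof (intro conjI allI impI)
  assume H: "p \<noteq> [] \<and> (\<forall>i. Suc i < length p \<longrightarrow> (p ! i, p ! Suc i) \<in> A)"
  then show "rev p \<noteq> []" by simp
  fix i assume i: "Suc i < length (rev p)"
  define j where "j = length p - Suc (Suc i)"
  have "Suc j < length p" "Suc j = length p - Suc i" using i by (auto simp: j_def)
  then have "(p ! j, p ! Suc j) \<in> A" using H by blast
  then show "(rev p ! i, rev p ! Suc i) \<in> A\<inverse>"
    using i by (simp add: rev_nth j_def \<open>Suc j = length p - Suc i\<close>[symmetric])
qed

lemma path_rev_iff: "is_path (A\<inverse>) p = is_path A (rev p)"
  by (metis converse_converse path_rev rev_rev_ident)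

lemma t_dom_conv: "t_dom A t a b = s_dom (A\<inverse>) t a b"
  unfolding t_dom_def s_dom_def
proof (intro iffI allI impI)
  fix p assume H: "\<forall>p. is_path A p \<and> hd p = b \<and> last p = t \<longrightarrow> a \<in> set p"
    and p: "is_path (A\<inverse>) p \<and> hd p = t \<and> last p = b"
  then have "p \<noteq> []" by (simp add: is_path_def)
  then show "a \<in> set p" using H[rule_format, of "rev p"] p by (simp add: path_rev_iff hd_rev last_rev)
next
  fix p assume H: "\<forall>p. is_path (A\<inverse>) p \<and> hd p = t \<and> last p = b \<longrightarrow> a \<in> set p"
    and p: "is_path A p \<and> hd p = b \<and> last p = t"
  then have "p \<noteq> []" by (simp add: is_path_def)
  then show "a \<in> set p" using H[rule_format, of "rev p"] p by (simp add: path_rev_iff hd_rev last_rev)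
qed

lemma imm_t_conv: "imm_t_dom N A t u v = imm_s_dom N (A\<inverse>) t u v"
  unfolding imm_t_dom_def imm_s_dom_def t_dom_conv ..

lemma s_dom_conv: "s_dom A s a b = t_dom (A\<inverse>) s a b"
  by (simp add: t_dom_conv)

lemma imm_s_conv: "imm_s_dom N A s u v = imm_t_dom N (A\<inverse>) s u v"
  by (simp add: imm_t_conv)

lemma st_dag_conv: "st_dag N A s t \<Longrightarrow> st_dag N (A\<inverse>) t s"
proof -
  assume G: "st_dag N A s t"
  have i: "in_nbrs (A\<inverse>) x = out_nbrs A x" for x unfolding in_nbrs_def out_nbrs_def by auto
  have o: "out_nbrs (A\<inverse>) x = in_nbrs A x" for x unfolding in_nbrs_def out_nbrs_def by auto
  have r: "((x, y) \<in> (A\<inverse>)\<^sup>*) = ((y, x) \<in> A\<^sup>*)" for x y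
    by (simp add: rtrancl_converse)
  have sub: "A\<inverse> \<subseteq> N \<times> N" using G unfolding st_dag_def by blast
  show ?thesis using G sub unfolding st_dag_def i o r by simp
qed

lemma compressed_conv: "compressed A \<Longrightarrow> compressed (A\<inverse>)"
  unfolding compressed_def in_nbrs_def out_nbrs_def by auto

lemma part1:
  assumes G: "st_dag N A s t" and C: "compressed A"
    and S: "imm_s_dom N A s u v" and T: "imm_t_dom N A t v u"
  shows "\<exists>w. w \<noteq> v \<and> imm_s_dom N A s u w"
proof -
  have fin: "finite N" and AN: "A \<subseteq> N \<times> N" and ac: "acyclic A" and sN: "s \<in> N" and tN: "t \<in> N"
    and ins: "{x \<in> N. in_nbrs A x = {}} = {s}" and outs: "{x \<in> N. out_nbrs A x = {}} = {t}"
    and reach: "\<forall>x \<in> N. (s, x) \<in> A\<^sup>* \<and> (x, t) \<in> A\<^sup>*"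
    using G unfolding st_dag_def by auto
  have uN: "u \<in> N" and vN: "v \<in> N" and vs: "v \<noteq> s" and uv: "u \<noteq> v" and suv: "s_dom A s u v"
    using S unfolding imm_s_dom_def by auto
  have ut: "u \<noteq> t" and tvu: "t_dom A t v u" using T unfolding imm_t_dom_def by auto
  have outu: "out_nbrs A u \<noteq> {}" using outs uN ut by blast
  have acy: "(x, x) \<notin> A\<^sup>+" for x using ac unfolding acyclic_def by blast
  have "\<exists>y. (u, y) \<in> A \<and> y \<noteq> v"
  proof (rule ccontr)
    assume "\<not> ?thesis"
    then have ov: "out_nbrs A u = {v}" using outu unfolding out_nbrs_def by auto
    then have uvA: "(u, v) \<in> A" unfolding out_nbrs_def by auto
    have "in_nbrs A v \<noteq> {u}" using C ov uvA unfolding compressed_def by blast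
    then obtain x where xv: "(x, v) \<in> A" and xu: "x \<noteq> u" using uvA unfolding in_nbrs_def by auto
    have xN: "x \<in> N" using xv AN by auto
    obtain p where p: "is_path A p" "hd p = s" "last p = x" using reach xN reach_path by meson
    have pne: "p \<noteq> []" using p by (simp add: is_path_def)
    have "is_path A (p @ tl [x, v])" using path_glue[OF p(1), of "[x, v]"] p xv
      by (simp add: is_path_def)
    then have "u \<in> set (p @ tl [x, v])"
      using suv[unfolded s_dom_def, rule_format, of "p @ tl [x, v]"] pne p by simp
    then have "u \<in> set p" using uv by auto
    then have "(u, x) \<in> A\<^sup>*" using path_last_reach[OF p(1)] p(3) by metis
    then have "(u, x) \<in> A\<^sup>+" using xu by (metis rtranclD)
    then obtain z where "(u, z) \<in> A" "(z, x) \<in> A\<^sup>*" by (meson tranclD)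
    then have "z = v" using ov unfolding out_nbrs_def by auto
    then have "(v, v) \<in> A\<^sup>+" using \<open>(z, x) \<in> A\<^sup>*\<close> xv by (simp add: rtrancl_into_trancl1)
    then show False using acy by blast
  qed
  then obtain y where uy: "(u, y) \<in> A" and yv: "y \<noteq> v" by blast
  have yN: "y \<in> N" using uy AN by auto
  have uy_ne: "u \<noteq> y" using uy acy by blast
  have ys: "y \<noteq> s"
  proof
    assume "y = s"
    then have "in_nbrs A y = {}" using ins by auto
    then show False using uy unfolding in_nbrs_def by auto
  qed
  have sdom: "s_dom A s u y" unfolding s_dom_def
  proof (intro allI impI)
    fix p assume p: "is_path A p \<and> hd p = s \<and> last p = y"
    obtain r where r: "is_path A r" "hd r = y" "last r = t" using reach yN reach_path by meson
    have rne: "r \<noteq> []" using r by (simp add: is_path_def)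
    have "is_path A (u # r)" using r rne uy by (simp add: is_path_Cons)
    then have "v \<in> set (u # r)" using tvu[unfolded t_dom_def, rule_format, of "u # r"] r rne by simp
    then have vr: "v \<in> set r" using uv by auto
    obtain r1 where r1: "is_path A r1" "hd r1 = y" "last r1 = v" "set r1 \<subseteq> set r"
      using path_prefix[OF r(1) vr] r by auto
    have r1ne: "r1 \<noteq> []" using r1 by (simp add: is_path_def)
    have pne: "p \<noteq> []" using p by (simp add: is_path_def)
    have q: "is_path A (p @ tl r1)" using path_glue p r1 by auto
    have "hd (p @ tl r1) = s" using p pne by simp
    moreover have "last (p @ tl r1) = v"
      using r1 r1ne p by (cases r1) auto
    ultimately have "u \<in> set (p @ tl r1)" using suv[unfolded s_dom_def, rule_format, of "p @ tl r1"] q by simp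
    moreover have "u \<notin> set r"
    proof
      assume "u \<in> set r"
      then have "(y, u) \<in> A\<^sup>*" using path_hd_reach[OF r(1)] r(2) by metis
      then have "(u, u) \<in> A\<^sup>+" using uy by (meson rtrancl_into_trancl2)
      then show False using acy by blast
    qed
    ultimately show "u \<in> set p" using r1 r1ne by (cases r1) auto
  qed
  have "imm_s_dom N A s u y" unfolding imm_s_dom_def
  proof (intro conjI ballI impI)
    fix w assume w: "w \<in> N" "w \<noteq> y \<and> s_dom A s w y"
    show "s_dom A s w u" unfolding s_dom_def
    proof (intro allI impI)
      fix p assume p: "is_path A p \<and> hd p = s \<and> last p = u"
      have pne: "p \<noteq> []" using p by (simp add: is_path_def)
      have "is_path A (p @ tl [u, y])" using path_glue[of A p "[u, y]"] p uy
        by (simp add: is_path_def)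
      then have "w \<in> set (p @ [y])" using w(2)[unfolded s_dom_def, THEN conjunct2, rule_format, of "p @ [y]"] pne p by simp
      then show "w \<in> set p" using w by auto
    qed
  qed (use uN yN ys uy_ne sdom in auto)
  then show ?thesis using yv by blast
qed

theorem lemma4:
  fixes N :: "'a set" and A :: "('a \<times> 'a) set" and s t u v :: 'a
  assumes "st_dag N A s t"
    and "compressed A"
    and "u \<in> N" and "v \<in> N" and "u \<noteq> v"
    and "imm_s_dom N A s u v"
    and "imm_t_dom N A t v u"
  shows "(\<exists>w. w \<noteq> v \<and> imm_s_dom N A s u w) \<and> (\<exists>w. w \<noteq> u \<and> imm_t_dom N A t v w)"
proof
  show "\<exists>w. w \<noteq> v \<and> imm_s_dom N A s u w" by (rule part1[OF assms(1,2,6,7)])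
  have h1: "imm_s_dom N (A\<inverse>) t v u" using assms(7) by (simp only: imm_t_conv)
  have h2: "imm_t_dom N (A\<inverse>) s u v" using assms(6) by (simp only: imm_s_conv)
  obtain w where "w \<noteq> u" "imm_s_dom N (A\<inverse>) t v w"
    using part1[OF st_dag_conv[OF assms(1)] compressed_conv[OF assms(2)] h1 h2] by blast
  then show "\<exists>w. w \<noteq> u \<and> imm_t_dom N A t v w" by (simp only: imm_t_conv) blast
qed

end
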